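(* Let $k$ be a field, $A=kQ_A/I_A$ a monomial algebra with vertices $e_1,\dots,e_n$, and $B$ the algebra obtained by gluing the distinct non-isolated vertices $e_1,e_n$. Assume that for every loop $\alpha$ at $e_1$ or $e_n$ with $\alpha^m\in Z_A$ for some $m\ge2$, $\mathrm{char}(k)\nmid m$. Then $\psi_1$ maps $\mathrm{Ker}(\delta^1_A)$ into $\mathrm{Ker}(\delta^1_B)$, and the induced map $\mathrm{Ker}(\delta^1_A)\hookrightarrow\mathrm{Ker}(\delta^1_B)$ is an injective (restricted) Lie algebra homomorphism.
   Context: Monomial algebra: $A=kQ_A/I_A$, $Q_A$ finite quiver, $I_A$ admissible, generated by a minimal set $Z_A$ of paths of length $\ge2$; $\mathcal B_A$: paths (including trivial ones) avoiding elements of $Z_A$ as subpaths, a basis of $A$. Gluing: $B\subseteq A$ generated by $f_1=e_1+e_n$, $f_i=e_i$ ($2\le i\le n-1$) and all arrows; $B\cong kQ_B/I_B$, $Q_B$ obtained by identifying $e_1,e_n$ to $f_1$ (arrow $\alpha\mapsto\alpha^*$, path $p=a_m\cdots a_1\mapsto p^*=a_m^*\cdots a_1^*$, $e_i^*=f_i$, $e_1^*=e_n^*=f_1$), $I_B$ generated by $Z_B=\{r^*:r\in Z_A\}\cup\{b^*c^*: b,c\text{ arrows},\ t(c),s(b)\in\{e_1,e_n\},\ t(c)\ne s(b)\}$; $\mathcal B_B$ its basis paths. For path sets $X,Y$, $k(X\|Y)$ has basis the pairs $x\|y$ of parallel paths (same source and target). For monomial $\Lambda=kQ/\langle Z\rangle$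 with basis paths $\mathcal B$, $\delta^1:k(Q_1\|\mathcal B)\to k(Z\|\mathcal B)$, $a\|\gamma\mapsto\sum_{r\in Z}r\|r^{a\|\gamma}$, where $u^{a\|\gamma}$ is the sum over occurrences of $a$ in the path $u$ of the path obtained by replacing that occurrence by $\gamma$, keeping only paths in $\mathcal B$. $\mathrm{Ker}\,\delta^1$ is a Lie algebra under $[a\|\gamma,b\|\epsilon]=b\|\epsilon^{a\|\gamma}-a\|\gamma^{b\|\epsilon}$ (it corresponds to the Lie algebra of $E$-bimodule derivations of $kQ_1$ into $\Lambda$; when $\mathrm{char}(k)=p>0$ it is restricted with $p$-power map given by $p$-fold composition of derivations). $\delta^1_A,\delta^1_B$ are these for $A,B$. $\psi_1:k((Q_A)_1\|\mathcal B_A)\to k((Q_B)_1\|\mathcal B_B)$, $a\|p\mapsto a^*\|p^*$. *)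

theory Defs
  imports Main "HOL-Library.Sublist"
begin

record ('v, 'a) quiver =
  verts :: "'v set"
  arrs  :: "'a set"
  src   :: "'a \<Rightarrow> 'v"
  tgt   :: "'a \<Rightarrow> 'v"

text \<open>A path is a start vertex together with the list of its arrows in the order
  in which they are traversed: the path a_m ... a_1 is (s(a_1), [a_1, ..., a_m]);
  the trivial path e_v is (v, []).\<close>
type_synonym ('v, 'a) qpath = "'v \<times> 'a list"

definition is_path :: "('v, 'a) quiver \<Rightarrow> ('v, 'a) qpath \<Rightarrow> bool" where
  "is_path Q p \<longleftrightarrow> fst p \<in> verts Q \<and> set (snd p) \<subseteq> arrs Q
     \<and> (snd p \<noteq> [] \<longrightarrow> src Q (hd (snd p)) = fst p)
     \<and> (\<forall>i. Suc i < length (snd p) \<longrightarrow> tgt Q (snd p ! i) = src Q (snd p ! Suc i))"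

definition ptgt :: "('v, 'a) quiver \<Rightarrow> ('v, 'a) qpath \<Rightarrow> 'v" where
  "ptgt Q p = (if snd p = [] then fst p else tgt Q (last (snd p)))"

definition parallel :: "('v, 'a) quiver \<Rightarrow> ('v, 'a) qpath \<Rightarrow> ('v, 'a) qpath \<Rightarrow> bool" where
  "parallel Q p q \<longleftrightarrow> fst p = fst q \<and> ptgt Q p = ptgt Q q"

definition arrow_path :: "('v, 'a) quiver \<Rightarrow> 'a \<Rightarrow> ('v, 'a) qpath" where
  "arrow_path Q a = (src Q a, [a])"

text \<open>Basis paths of kQ/<Z>: paths having no element of Z as a (contiguous) subpath.\<close>
definition basis_paths :: "('v, 'a) quiver \<Rightarrow> ('v, 'a) qpath set \<Rightarrow> ('v, 'a) qpath set" where
  "basis_paths Q Z = {p. is_path Q p \<and> \<not> (\<exists>r\<in>Z. sublist (snd r) (snd p))}"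

text \<open>kQ/<Z> is a monomial algebra: finite quiver, Z a finite minimal set of paths of
  length at least 2, and the ideal admissible (finitely many basis paths).\<close>
definition monomial :: "('v, 'a) quiver \<Rightarrow> ('v, 'a) qpath set \<Rightarrow> bool" where
  "monomial Q Z \<longleftrightarrow> finite (verts Q) \<and> finite (arrs Q)
     \<and> (\<forall>a\<in>arrs Q. src Q a \<in> verts Q \<and> tgt Q a \<in> verts Q)
     \<and> finite Z \<and> (\<forall>r\<in>Z. is_path Q r \<and> 2 \<le> length (snd r))
     \<and> (\<forall>r\<in>Z. \<forall>r'\<in>Z. sublist (snd r') (snd r) \<longrightarrow> r' = r)
     \<and> finite (basis_paths Q Z)"

text \<open>Elements of k(Q_1 || B): finitely supported functions on pairs (a, gamma) with
  a an arrow, gamma a basis path parallel to a.\<close>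
definition cochains1 :: "('v, 'a) quiver \<Rightarrow> ('v, 'a) qpath set
    \<Rightarrow> ('a \<times> ('v, 'a) qpath \<Rightarrow> 'k::field) set" where
  "cochains1 Q Z = {f. finite {x. f x \<noteq> 0} \<and>
     (\<forall>a p. f (a, p) \<noteq> 0 \<longrightarrow> a \<in> arrs Q \<and> p \<in> basis_paths Q Z \<and> parallel Q (arrow_path Q a) p)}"

text \<open>Coefficient of the path q in u^{a||gamma}: number of occurrences of a in u whose
  replacement by gamma gives q, provided q is a basis path (otherwise 0).\<close>
definition repl_coeff :: "('v, 'a) quiver \<Rightarrow> ('v, 'a) qpath set \<Rightarrow> ('v, 'a) qpath \<Rightarrow> 'a
    \<Rightarrow> ('v, 'a) qpath \<Rightarrow> ('v, 'a) qpath \<Rightarrow> 'k::field" where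
  "repl_coeff Q Z u a \<gamma> q = (if q \<in> basis_paths Q Z then
     of_nat (card {i. i < length (snd u) \<and> snd u ! i = a \<and>
        (fst u, take i (snd u) @ snd \<gamma> @ drop (Suc i) (snd u)) = q}) else 0)"

text \<open>u^f for f = sum of f(a,gamma) a||gamma, as a linear combination of paths.\<close>
definition der_path :: "('v, 'a) quiver \<Rightarrow> ('v, 'a) qpath set
    \<Rightarrow> ('a \<times> ('v, 'a) qpath \<Rightarrow> 'k::field) \<Rightarrow> ('v, 'a) qpath \<Rightarrow> ('v, 'a) qpath \<Rightarrow> 'k" where
  "der_path Q Z f u = (\<lambda>q. \<Sum>x\<in>{x. f x \<noteq> 0}. f x * repl_coeff Q Z u (fst x) (snd x) q)"

definition der :: "('v, 'a) quiver \<Rightarrow> ('v, 'a) qpath set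
    \<Rightarrow> ('a \<times> ('v, 'a) qpath \<Rightarrow> 'k::field) \<Rightarrow> (('v, 'a) qpath \<Rightarrow> 'k) \<Rightarrow> ('v, 'a) qpath \<Rightarrow> 'k" where
  "der Q Z f c = (\<lambda>q. \<Sum>u\<in>{u. c u \<noteq> 0}. c u * der_path Q Z f u q)"

definition delta1 :: "('v, 'a) quiver \<Rightarrow> ('v, 'a) qpath set
    \<Rightarrow> ('a \<times> ('v, 'a) qpath \<Rightarrow> 'k::field) \<Rightarrow> (('v, 'a) qpath \<times> ('v, 'a) qpath \<Rightarrow> 'k)" where
  "delta1 Q Z f = (\<lambda>(r, q). if r \<in> Z then der_path Q Z f r q else 0)"

definition ker1 :: "('v, 'a) quiver \<Rightarrow> ('v, 'a) qpath set
    \<Rightarrow> ('a \<times> ('v, 'a) qpath \<Rightarrow> 'k::field) set" where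
  "ker1 Q Z = {f \<in> cochains1 Q Z. delta1 Q Z f = (\<lambda>_. 0)}"

text \<open>Lie bracket, bilinear extension of
  [a||gamma, b||eps] = b||eps^{a||gamma} - a||gamma^{b||eps}.\<close>
definition bracket :: "('v, 'a) quiver \<Rightarrow> ('v, 'a) qpath set
    \<Rightarrow> ('a \<times> ('v, 'a) qpath \<Rightarrow> 'k::field) \<Rightarrow> ('a \<times> ('v, 'a) qpath \<Rightarrow> 'k)
    \<Rightarrow> ('a \<times> ('v, 'a) qpath \<Rightarrow> 'k)" where
  "bracket Q Z f g = (\<lambda>(x, q). der Q Z f (\<lambda>e. g (x, e)) q - der Q Z g (\<lambda>e. f (x, e)) q)"

text \<open>p-power map: the p-fold composite of the derivation D_f, evaluated on arrows:
  f^[p](x) = D_f^p(x) = D_f^(p-1)(f(x)).\<close>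
definition ppow :: "('v, 'a) quiver \<Rightarrow> ('v, 'a) qpath set \<Rightarrow> nat
    \<Rightarrow> ('a \<times> ('v, 'a) qpath \<Rightarrow> 'k::field) \<Rightarrow> ('a \<times> ('v, 'a) qpath \<Rightarrow> 'k)" where
  "ppow Q Z p f = (\<lambda>(x, q). ((der Q Z f) ^^ (p - 1)) (\<lambda>e. f (x, e)) q)"

text \<open>Gluing the vertices u (= e_1) and w (= e_n) into u (= f_1).\<close>
definition gluev :: "'v \<Rightarrow> 'v \<Rightarrow> 'v \<Rightarrow> 'v" where
  "gluev u w v = (if v = w then u else v)"

definition glue_quiver :: "('v, 'a) quiver \<Rightarrow> 'v \<Rightarrow> 'v \<Rightarrow> ('v, 'a) quiver" where
  "glue_quiver Q u w = \<lparr>verts = gluev u w ` verts Q, arrs = arrs Q,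
     src = gluev u w \<circ> src Q, tgt = gluev u w \<circ> tgt Q\<rparr>"

definition glue_path :: "'v \<Rightarrow> 'v \<Rightarrow> ('v, 'a) qpath \<Rightarrow> ('v, 'a) qpath" where
  "glue_path u w p = (gluev u w (fst p), snd p)"

text \<open>Z_B = {r^*} union {b^* c^* : t(c), s(b) in {e_1,e_n}, t(c) /= s(b)}.\<close>
definition glue_rels :: "('v, 'a) quiver \<Rightarrow> ('v, 'a) qpath set \<Rightarrow> 'v \<Rightarrow> 'v \<Rightarrow> ('v, 'a) qpath set" where
  "glue_rels Q Z u w = glue_path u w ` Z \<union>
     {(gluev u w (src Q c), [c, b]) | b c. b \<in> arrs Q \<and> c \<in> arrs Q
        \<and> tgt Q c \<in> {u, w} \<and> src Q b \<in> {u, w} \<and> tgt Q c \<noteq> src Q b}"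

definition psi1 :: "'v \<Rightarrow> 'v \<Rightarrow> ('a \<times> ('v, 'a) qpath \<Rightarrow> 'k::field) \<Rightarrow> ('a \<times> ('v, 'a) qpath \<Rightarrow> 'k)" where
  "psi1 u w f = (\<lambda>(a, q). \<Sum>p\<in>{p. f (a, p) \<noteq> 0 \<and> glue_path u w p = q}. f (a, p))"

definition non_isolated :: "('v, 'a) quiver \<Rightarrow> 'v \<Rightarrow> bool" where
  "non_isolated Q v \<longleftrightarrow> (\<exists>a\<in>arrs Q. src Q a = v \<or> tgt Q a = v)"

end

theory Submission
  imports Defs
begin


fun chain :: "('v,'a) quiver \<Rightarrow> 'v \<Rightarrow> 'a list \<Rightarrow> bool" where
  "chain Q v [] = True"
| "chain Q v (a # l) = (a \<in> arrs Q \<and> src Q a = v \<and> chain Q (tgt Q a) l)"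

fun endv :: "('v,'a) quiver \<Rightarrow> 'v \<Rightarrow> 'a list \<Rightarrow> 'v" where
  "endv Q v [] = v"
| "endv Q v (a # l) = endv Q (tgt Q a) l"

lemma all_nat_split: "(\<forall>i::nat. P i) \<longleftrightarrow> P 0 \<and> (\<forall>j. P (Suc j))"
  by (metis not0_implies_Suc)

lemma chain_iff: "chain Q v l \<longleftrightarrow> set l \<subseteq> arrs Q \<and> (l \<noteq> [] \<longrightarrow> src Q (hd l) = v)
     \<and> (\<forall>i. Suc i < length l \<longrightarrow> tgt Q (l ! i) = src Q (l ! Suc i))"
proof (induction l arbitrary: v)
  case Nil then show ?case by simp
next
  case (Cons a l)
  show ?case
    apply (subst all_nat_split)
    apply (simp add: Cons.IH)
    apply (cases l) apply (auto simp: hd_conv_nth)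
    done
qed

lemma is_path_chain: "is_path Q p \<longleftrightarrow> fst p \<in> verts Q \<and> chain Q (fst p) (snd p)"
  by (auto simp: is_path_def chain_iff)

lemma endv_eq: "endv Q v l = (if l = [] then v else tgt Q (last l))"
  by (induction l arbitrary: v) auto

lemma ptgt_endv: "ptgt Q p = endv Q (fst p) (snd p)"
  by (simp add: ptgt_def endv_eq)

lemma chain_append: "chain Q v (xs @ ys) \<longleftrightarrow> chain Q v xs \<and> chain Q (endv Q v xs) ys"
  by (induction xs arbitrary: v) auto

lemma chain_glue: "chain Q v l \<Longrightarrow> chain (glue_quiver Q u w) (gluev u w v) l"
  by (induction l arbitrary: v) (auto simp: glue_quiver_def)

lemma chain_sublist2: "chain Q v l \<Longrightarrow> sublist [c,b] l \<Longrightarrow> tgt Q c = src Q b"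
  by (auto simp: sublist_def chain_append)

lemma repl_path:
  assumes p: "is_path Q p" and i: "i < length (snd p)" and a: "snd p ! i = a"
    and g: "is_path Q \<gamma>" and gs: "fst \<gamma> = src Q a" and gt: "ptgt Q \<gamma> = tgt Q a"
  shows "is_path Q (fst p, take i (snd p) @ snd \<gamma> @ drop (Suc i) (snd p))"
proof -
  let ?l = "snd p"
  have l: "?l = take i ?l @ a # drop (Suc i) ?l" using id_take_nth_drop[OF i] a by simp
  have c: "chain Q (fst p) ?l" and fv: "fst p \<in> verts Q" using p by (auto simp: is_path_chain)
  then have c1: "chain Q (fst p) (take i ?l)" and c2: "chain Q (endv Q (fst p) (take i ?l)) (a # drop (Suc i) ?l)"
    using chain_append[of Q "fst p" "take i ?l" "a # drop (Suc i) ?l"] l by auto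
  have cg: "chain Q (src Q a) (snd \<gamma>)" using g gs by (auto simp: is_path_chain)
  have eg: "endv Q (src Q a) (snd \<gamma>) = tgt Q a" using gt gs by (simp add: ptgt_endv)
  show ?thesis using c1 c2 cg eg fv by (auto simp: is_path_chain chain_append)
qed

lemma parallel_arrow: "parallel Q (arrow_path Q a) \<gamma> \<longleftrightarrow> fst \<gamma> = src Q a \<and> ptgt Q \<gamma> = tgt Q a"
  by (auto simp: parallel_def arrow_path_def ptgt_def)

lemma basis_glue:
  assumes p: "is_path Q p"
  shows "glue_path u w p \<in> basis_paths (glue_quiver Q u w) (glue_rels Q Z u w) \<longleftrightarrow> p \<in> basis_paths Q Z"
proof -
  have c: "chain Q (fst p) (snd p)" and fv: "fst p \<in> verts Q" using p by (auto simp: is_path_chain)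
  have pb: "is_path (glue_quiver Q u w) (glue_path u w p)"
    using chain_glue[OF c, of u w] fv by (auto simp: is_path_chain glue_path_def glue_quiver_def)
  have new: "\<not> sublist [c, b] (snd p)" if "tgt Q c \<noteq> src Q b" for b c
    using chain_sublist2[OF c] that by blast
  have "(\<exists>r\<in>glue_rels Q Z u w. sublist (snd r) (snd p)) \<longleftrightarrow> (\<exists>r\<in>Z. sublist (snd r) (snd p))"
  proof
    assume "\<exists>r\<in>Z. sublist (snd r) (snd p)"
    then obtain r where "r \<in> Z" "sublist (snd r) (snd p)" by blast
    then show "\<exists>r\<in>glue_rels Q Z u w. sublist (snd r) (snd p)"
      by (intro bexI[of _ "glue_path u w r"]) (auto simp: glue_rels_def glue_path_def)
  next
    assume "\<exists>r\<in>glue_rels Q Z u w. sublist (snd r) (snd p)"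
    then obtain r where r: "r \<in> glue_rels Q Z u w" "sublist (snd r) (snd p)" by blast
    show "\<exists>r\<in>Z. sublist (snd r) (snd p)"
    proof (cases "r \<in> glue_path u w ` Z")
      case True
      then obtain r0 where "r0 \<in> Z" "r = glue_path u w r0" by blast
      then show ?thesis using r by (auto simp: glue_path_def)
    next
      case False
      then show ?thesis using r by (auto simp: glue_rels_def dest: new)
    qed
  qed
  then show ?thesis using p pb
    by (auto simp: basis_paths_def glue_path_def)
qed

lemma pre_finite: "finite {p. glue_path u w p = q}"
proof -
  have "{p. glue_path u w p = q} \<subseteq> {(u, snd q), (w, snd q), q}"
    by (auto simp: glue_path_def gluev_def)
  then show ?thesis by (rule finite_subset) simp
qed



definition Phi :: "('x \<Rightarrow> 'y) \<Rightarrow> ('x \<Rightarrow> 'k::field) \<Rightarrow> 'y \<Rightarrow> 'k" where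
  "Phi h c e = (\<Sum>x\<in>{x. c x \<noteq> 0 \<and> h x = e}. c x)"

lemma Phi_supp: "Phi h c e \<noteq> 0 \<Longrightarrow> \<exists>x. c x \<noteq> 0 \<and> h x = e"
proof (rule ccontr)
  assume "Phi h c e \<noteq> 0" "\<not> (\<exists>x. c x \<noteq> 0 \<and> h x = e)"
  then have E: "{x. c x \<noteq> 0 \<and> h x = e} = {}" by blast
  show False using \<open>Phi h c e \<noteq> 0\<close> unfolding Phi_def E by simp
qed

lemma Phi_alt: assumes "finite {x. h x = e}" shows "Phi h c e = sum c {x. h x = e}"
  unfolding Phi_def by (rule sum.mono_neutral_left) (use assms in auto)

lemma Phi_S: assumes "finite S" "{x. c x \<noteq> 0} \<subseteq> S"
  shows "Phi h c e = sum c {x \<in> S. h x = e}"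
  unfolding Phi_def by (rule sum.mono_neutral_left) (use assms in auto)

lemma push:
  assumes S: "finite S" "{x. c x \<noteq> 0} \<subseteq> S"
  shows "(\<Sum>e\<in>{e. Phi h c e \<noteq> 0}. Phi h c e * k e) = (\<Sum>x\<in>S. c x * k (h x))"
proof -
  have "(\<Sum>e\<in>{e. Phi h c e \<noteq> 0}. Phi h c e * k e) = (\<Sum>e\<in>h ` S. Phi h c e * k e)"
    by (rule sum.mono_neutral_left) (use S Phi_supp in force)+
  also have "\<dots> = (\<Sum>e\<in>h ` S. (\<Sum>x\<in>{x \<in> S. h x = e}. c x * k (h x)))"
    by (rule sum.cong) (auto simp: Phi_S[OF S] sum_distrib_right)
  also have "\<dots> = (\<Sum>x\<in>S. c x * k (h x))"
    using sum.image_gen[OF S(1), of "\<lambda>x. c x * k (h x)" h] by simp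
  finally show ?thesis .
qed

lemma psi1_Phi: "psi1 u w f = Phi (\<lambda>x. (fst x, glue_path u w (snd x))) f"
proof (rule ext, clarify)
  fix a q
  have "{x. f x \<noteq> 0 \<and> (fst x, glue_path u w (snd x)) = (a, q)} = Pair a ` {p. f (a, p) \<noteq> 0 \<and> glue_path u w p = q}"
    by auto
  then show "psi1 u w f (a, q) = Phi (\<lambda>x. (fst x, glue_path u w (snd x))) f (a, q)"
    unfolding psi1_def Phi_def by (simp add: sum.reindex inj_on_def)
qed

lemma psi1_Phi2: "psi1 u w f (a, q) = Phi (glue_path u w) (\<lambda>p. f (a, p)) q"
  unfolding psi1_def Phi_def by simp

lemma cochainsD:
  assumes "f \<in> cochains1 Q Z" "f (a, p) \<noteq> 0"
  shows "a \<in> arrs Q" "p \<in> basis_paths Q Z" "is_path Q p" "fst p = src Q a" "ptgt Q p = tgt Q a"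
proof -
  have "a \<in> arrs Q \<and> p \<in> basis_paths Q Z \<and> parallel Q (arrow_path Q a) p"
    using assms unfolding cochains1_def by blast
  then show "a \<in> arrs Q" "p \<in> basis_paths Q Z" "is_path Q p" "fst p = src Q a" "ptgt Q p = tgt Q a"
    by (simp_all add: basis_paths_def parallel_arrow)
qed

lemma repl_key:
  assumes p: "is_path Q p" and g: "is_path Q \<gamma>" and gs: "fst \<gamma> = src Q a" and gt: "ptgt Q \<gamma> = tgt Q a"
  shows "(repl_coeff (glue_quiver Q u w) (glue_rels Q Z u w) (glue_path u w p) a (glue_path u w \<gamma>) q :: 'k::field)
     = (\<Sum>p'\<in>{p'. glue_path u w p' = q}. repl_coeff Q Z p a \<gamma> p')"
proof -
  define I where "I = {i. i < length (snd p) \<and> snd p ! i = a}"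
  define r where "r = (\<lambda>i. (fst p, take i (snd p) @ snd \<gamma> @ drop (Suc i) (snd p)))"
  let ?BB = "basis_paths (glue_quiver Q u w) (glue_rels Q Z u w)"
  let ?pre = "{p'. glue_path u w p' = q}"
  have rp: "is_path Q (r i)" if "i \<in> I" for i
    using repl_path[OF p _ _ g gs gt] that by (auto simp: I_def r_def)
  have finI: "finite I" unfolding I_def by auto
  have L: "(repl_coeff (glue_quiver Q u w) (glue_rels Q Z u w) (glue_path u w p) a (glue_path u w \<gamma>) q :: 'k)
      = (if q \<in> ?BB then of_nat (card {i\<in>I. glue_path u w (r i) = q}) else 0)"
    unfolding repl_coeff_def by (simp add: I_def r_def glue_path_def conj_assoc)
  have each: "(repl_coeff Q Z p a \<gamma> p' :: 'k) = (if q \<in> ?BB then of_nat (card {i\<in>I. r i = p'}) else 0)"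
    if "p' \<in> ?pre" for p'
  proof -
    have eqset: "{i. i < length (snd p) \<and> snd p ! i = a \<and> (fst p, take i (snd p) @ snd \<gamma> @ drop (Suc i) (snd p)) = p'}
       = {i\<in>I. r i = p'}" by (auto simp: I_def r_def)
    show ?thesis
  proof (cases "{i\<in>I. r i = p'} = {}")
    case True
    show ?thesis unfolding repl_coeff_def eqset True by simp
  next
    case False
    then obtain i where "i \<in> I" "r i = p'" by blast
    then have "is_path Q p'" using rp by blast
    then have "q \<in> ?BB \<longleftrightarrow> p' \<in> basis_paths Q Z" using basis_glue[of Q p' u w Z] that by simp
    then show ?thesis unfolding repl_coeff_def eqset by simp
  qed
  qed
  have card: "card {i\<in>I. glue_path u w (r i) = q} = (\<Sum>p'\<in>?pre. card {i\<in>I. r i = p'})"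
  proof -
    have "{i\<in>I. glue_path u w (r i) = q} = (\<Union>p'\<in>?pre. {i\<in>I. r i = p'})" by auto
    then show ?thesis
      by (simp only:) (rule card_UN_disjoint, auto simp: pre_finite finI)
  qed
  show ?thesis
    unfolding L card using each by (simp add: sum.cong[OF refl each])
qed



lemma DP:
  assumes f: "f \<in> cochains1 Q Z" and p: "is_path Q p"
  shows "der_path (glue_quiver Q u w) (glue_rels Q Z u w) (psi1 u w f) (glue_path u w p) q
       = (\<Sum>p'\<in>{p'. glue_path u w p' = q}. der_path Q Z f p p')"
proof -
  let ?G = "\<lambda>x. (fst x, glue_path u w (snd x))"
  let ?T = "{x. f x \<noteq> 0}"
  let ?pre = "{p'. glue_path u w p' = q}"
  let ?RB = "repl_coeff (glue_quiver Q u w) (glue_rels Q Z u w)"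
  have finT: "finite ?T" using f by (simp add: cochains1_def)
  have "der_path (glue_quiver Q u w) (glue_rels Q Z u w) (psi1 u w f) (glue_path u w p) q
     = (\<Sum>y\<in>{y. Phi ?G f y \<noteq> 0}. Phi ?G f y * ?RB (glue_path u w p) (fst y) (snd y) q)"
    unfolding der_path_def psi1_Phi ..
  also have "\<dots> = (\<Sum>x\<in>?T. f x * ?RB (glue_path u w p) (fst x) (glue_path u w (snd x)) q)"
    using push[OF finT subset_refl, of ?G "\<lambda>y. ?RB (glue_path u w p) (fst y) (snd y) q"] by simp
  also have "\<dots> = (\<Sum>x\<in>?T. f x * (\<Sum>p'\<in>?pre. repl_coeff Q Z p (fst x) (snd x) p'))"
  proof (rule sum.cong[OF refl])
    fix x assume "x \<in> ?T"
    then obtain a \<gamma> where x: "x = (a, \<gamma>)" "f (a, \<gamma>) \<noteq> 0" by (cases x) auto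
    show "f x * ?RB (glue_path u w p) (fst x) (glue_path u w (snd x)) q
       = f x * (\<Sum>p'\<in>?pre. repl_coeff Q Z p (fst x) (snd x) p')"
      using repl_key[OF p cochainsD(3,4,5)[OF f x(2)]] x by simp
  qed
  also have "\<dots> = (\<Sum>x\<in>?T. \<Sum>p'\<in>?pre. f x * repl_coeff Q Z p (fst x) (snd x) p')"
    by (simp add: sum_distrib_left)
  also have "\<dots> = (\<Sum>p'\<in>?pre. \<Sum>x\<in>?T. f x * repl_coeff Q Z p (fst x) (snd x) p')"
    by (rule sum.swap)
  also have "\<dots> = (\<Sum>p'\<in>?pre. der_path Q Z f p p')"
    unfolding der_path_def ..
  finally show ?thesis .
qed

lemma DER:
  fixes Q :: "('v,'a) quiver" and f :: "'a \<times> ('v,'a) qpath \<Rightarrow> 'k::field"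
  assumes f: "f \<in> cochains1 Q Z" and c: "finite {p. c p \<noteq> 0}" "\<forall>p. c p \<noteq> 0 \<longrightarrow> is_path Q p"
  shows "der (glue_quiver Q u w) (glue_rels Q Z u w) (psi1 u w f) (Phi (glue_path u w) c)
       = Phi (glue_path u w) (der Q Z f c)"
proof (rule ext)
  fix q :: "('v,'a) qpath"
  let ?S = "{p. c p \<noteq> 0}"
  let ?pre = "{p'. glue_path u w p' = q}"
  let ?DB = "der_path (glue_quiver Q u w) (glue_rels Q Z u w) (psi1 u w f)"
  have "der (glue_quiver Q u w) (glue_rels Q Z u w) (psi1 u w f) (Phi (glue_path u w) c) q
     = (\<Sum>e\<in>{e. Phi (glue_path u w) c e \<noteq> 0}. Phi (glue_path u w) c e * ?DB e q)"
    unfolding der_def ..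
  also have "\<dots> = (\<Sum>p\<in>?S. c p * ?DB (glue_path u w p) q)"
    by (rule push[OF c(1) subset_refl])
  also have "\<dots> = (\<Sum>p\<in>?S. c p * (\<Sum>p'\<in>?pre. der_path Q Z f p p'))"
    by (rule sum.cong) (simp_all add: DP[OF f] c(2))
  also have "\<dots> = (\<Sum>p\<in>?S. \<Sum>p'\<in>?pre. c p * der_path Q Z f p p')"
    by (simp add: sum_distrib_left)
  also have "\<dots> = (\<Sum>p'\<in>?pre. \<Sum>p\<in>?S. c p * der_path Q Z f p p')"
    by (rule sum.swap)
  also have "\<dots> = (\<Sum>p'\<in>?pre. der Q Z f c p')"
    unfolding der_def ..
  also have "\<dots> = Phi (glue_path u w) (der Q Z f c) q"
    by (simp add: Phi_alt pre_finite)
  finally show "der (glue_quiver Q u w) (glue_rels Q Z u w) (psi1 u w f) (Phi (glue_path u w) c) q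
       = Phi (glue_path u w) (der Q Z f c) q" .
qed

lemma der_supp: "der Q Z f c q \<noteq> 0 \<Longrightarrow> q \<in> basis_paths Q Z"
  by (rule ccontr) (simp add: der_def der_path_def repl_coeff_def)

lemma DER_iter:
  assumes f: "f \<in> cochains1 Q Z" and mono: "monomial Q Z"
  shows "finite {p. c p \<noteq> 0} \<Longrightarrow> \<forall>p. c p \<noteq> 0 \<longrightarrow> is_path Q p \<Longrightarrow>
    Phi (glue_path u w) ((der Q Z f ^^ n) c)
     = (der (glue_quiver Q u w) (glue_rels Q Z u w) (psi1 u w f) ^^ n) (Phi (glue_path u w) c)"
proof (induction n arbitrary: c)
  case 0 then show ?case by simp
next
  case (Suc n)
  have fb: "finite (basis_paths Q Z)" using mono by (simp add: monomial_def)
  have d1: "finite {p. der Q Z f c p \<noteq> 0}"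
    by (rule finite_subset[OF _ fb]) (auto dest: der_supp)
  have d2: "\<forall>p. der Q Z f c p \<noteq> 0 \<longrightarrow> is_path Q p"
    by (auto dest: der_supp simp: basis_paths_def)
  have "Phi (glue_path u w) ((der Q Z f ^^ Suc n) c) = Phi (glue_path u w) ((der Q Z f ^^ n) (der Q Z f c))"
    by (simp add: funpow_swap1)
  also have "\<dots> = (der (glue_quiver Q u w) (glue_rels Q Z u w) (psi1 u w f) ^^ n) (Phi (glue_path u w) (der Q Z f c))"
    using Suc.IH[OF d1 d2] .
  also have "\<dots> = (der (glue_quiver Q u w) (glue_rels Q Z u w) (psi1 u w f) ^^ n) (der (glue_quiver Q u w) (glue_rels Q Z u w) (psi1 u w f) (Phi (glue_path u w) c))"
    by (simp add: DER[OF f Suc.prems])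
  also have "\<dots> = (der (glue_quiver Q u w) (glue_rels Q Z u w) (psi1 u w f) ^^ Suc n) (Phi (glue_path u w) c)"
    by (simp add: funpow_swap1)
  finally show ?case .
qed



lemma chain_rep: "\<alpha> \<in> arrs Q \<Longrightarrow> src Q \<alpha> = v \<Longrightarrow> tgt Q \<alpha> = v \<Longrightarrow> chain Q v (replicate n \<alpha>)"
  by (induction n) auto

lemma loop_zero:
  fixes f :: "'a \<times> ('v,'a) qpath \<Rightarrow> 'k::field"
  assumes mono: "monomial Q Z" and f: "f \<in> ker1 Q Z" and al: "\<alpha> \<in> arrs Q" "src Q \<alpha> = tgt Q \<alpha>"
    and ch: "\<forall>m::nat. 2 \<le> m \<and> (src Q \<alpha>, replicate m \<alpha>) \<in> Z \<longrightarrow> \<not> CHAR('k) dvd m"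
  shows "f (\<alpha>, (src Q \<alpha>, [])) = 0"
proof -
  let ?v = "src Q \<alpha>"
  have fv: "?v \<in> verts Q" using mono al by (simp add: monomial_def)
  have rp: "is_path Q (?v, replicate n \<alpha>)" for n
    using chain_rep[OF al(1) refl al(2)[symmetric]] fv by (simp add: is_path_chain)
  have fb: "finite (basis_paths Q Z)" using mono by (simp add: monomial_def)
  have "\<not> range (\<lambda>n. (?v, replicate n \<alpha>)) \<subseteq> basis_paths Q Z"
  proof
    assume "range (\<lambda>n. (?v, replicate n \<alpha>)) \<subseteq> basis_paths Q Z"
    then have "finite (range (\<lambda>n. (?v, replicate n \<alpha>)))" using fb finite_subset by blast
    moreover have "inj (\<lambda>n. (?v, replicate n \<alpha>))" by (rule injI) simp
    ultimately have "finite (UNIV :: nat set)" using finite_imageD by blast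
    then show False by simp
  qed
  then obtain n where "(?v, replicate n \<alpha>) \<notin> basis_paths Q Z" by blast
  then obtain r where r: "r \<in> Z" "sublist (snd r) (replicate n \<alpha>)" using rp by (auto simp: basis_paths_def)
  define m where "m = length (snd r)"
  have rpath: "is_path Q r" and m2: "2 \<le> m" using mono r(1) by (auto simp: monomial_def m_def)
  have "set (snd r) \<subseteq> {\<alpha>}" using set_mono_sublist[OF r(2)] by (auto split: if_splits)
  then have sr: "snd r = replicate m \<alpha>" unfolding m_def
    by (metis replicate_length_same singletonD subsetD)
  have fr: "fst r = ?v" using rpath sr m2 unfolding is_path_def
    by (cases m) auto
  have rZ: "(?v, replicate m \<alpha>) \<in> Z" using r(1) sr fr by (metis prod.collapse)
  have chm: "of_nat m \<noteq> (0::'k)" using ch m2 rZ of_nat_eq_0_iff_char_dvd by blast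
  let ?r = "(?v, replicate m \<alpha>)"
  let ?q = "(?v, replicate (m-1) \<alpha>)"
  have qb: "?q \<in> basis_paths Q Z"
  proof -
    have "\<not> sublist (snd r') (replicate (m-1) \<alpha>)" if r': "r' \<in> Z" for r'
    proof
      assume s: "sublist (snd r') (replicate (m-1) \<alpha>)"
      have "replicate m \<alpha> = replicate (m-1) \<alpha> @ replicate 1 \<alpha>" using m2
        by (metis le_add_diff_inverse2 one_le_numeral order_trans replicate_add)
      then have "sublist (replicate (m-1) \<alpha>) (replicate m \<alpha>)" by (metis sublist_append_rightI)
      then have "sublist (snd r') (snd ?r)" using s by (metis sublist_order.order_trans snd_conv)
      then have "r' = ?r" using mono r' rZ by (auto simp: monomial_def)
      then show False using sublist_length_le[OF s] m2 by simp
    qed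
    then show ?thesis using rp by (auto simp: basis_paths_def)
  qed
  have "delta1 Q Z f (?r, ?q) = 0" using f by (simp add: ker1_def)
  then have dp: "der_path Q Z f ?r ?q = 0" using rZ by (simp add: delta1_def)
  let ?T = "{x. f x \<noteq> 0}"
  let ?x0 = "(\<alpha>, (?v, [])) :: 'a \<times> ('v,'a) qpath"
  show ?thesis
  proof (rule ccontr)
    assume nz: "f ?x0 \<noteq> 0"
    have finT: "finite ?T" using f by (simp add: ker1_def cochains1_def)
    have fc: "f \<in> cochains1 Q Z" using f by (simp add: ker1_def)
    have other: "repl_coeff Q Z ?r (fst x) (snd x) ?q = (0::'k)" if "x \<in> ?T" "x \<noteq> ?x0" for x
    proof -
      obtain a \<gamma> where x: "x = (a, \<gamma>)" by (cases x)
      have fg: "fst \<gamma> = src Q a" using cochainsD(4)[OF fc] that x by auto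
      have E: "{i. i < length (snd ?r) \<and> snd ?r ! i = a \<and>
          (fst ?r, take i (snd ?r) @ snd \<gamma> @ drop (Suc i) (snd ?r)) = ?q} = {}"
      proof (rule ccontr)
        assume "\<not> ?thesis"
        then obtain i where i: "i < m" "replicate m \<alpha> ! i = a"
          "take i (replicate m \<alpha>) @ snd \<gamma> @ drop (Suc i) (replicate m \<alpha>) = replicate (m-1) \<alpha>" by auto
        have "a = \<alpha>" using i by simp
        moreover have L: "length (snd \<gamma>) + m - 1 = m - 1" using arg_cong[OF i(3), of length] i(1) by simp
        then have "length (snd \<gamma>) = 0" using i(1) by arith
        ultimately have "x = ?x0" using x fg by (cases \<gamma>) auto
        then show False using that by simp
      qed
      have "repl_coeff Q Z ?r a \<gamma> ?q = (0::'k)" unfolding repl_coeff_def E by simp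
      then show ?thesis using x by simp
    qed
    have main: "repl_coeff Q Z ?r \<alpha> (?v, []) ?q = (of_nat m :: 'k)"
    proof -
      have E: "{i. i < length (snd ?r) \<and> snd ?r ! i = \<alpha> \<and>
          (fst ?r, take i (snd ?r) @ snd (?v, [] :: 'a list) @ drop (Suc i) (snd ?r)) = ?q} = {..<m}"
        by (auto simp: min_def replicate_add[symmetric])
      show ?thesis unfolding repl_coeff_def E using qb by simp
    qed
    have "der_path Q Z f ?r ?q = (\<Sum>x\<in>?T. if x = ?x0 then f ?x0 * of_nat m else 0)"
      unfolding der_path_def
    proof (rule sum.cong[OF refl])
      fix x assume xT: "x \<in> ?T"
      show "f x * repl_coeff Q Z ?r (fst x) (snd x) ?q = (if x = ?x0 then f ?x0 * of_nat m else 0)"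
      proof (cases "x = ?x0")
        case True
        then show ?thesis using main by simp
      next
        case False
        then show ?thesis using other[OF xT False] by simp
      qed
    qed
    also have "\<dots> = f ?x0 * of_nat m" using finT nz by (simp add: sum.delta)
    finally show False using dp nz chm by simp
  qed
qed



lemma ptgt_glue: "ptgt (glue_quiver Q u w) (glue_path u w p) = gluev u w (ptgt Q p)"
  by (simp add: ptgt_def glue_quiver_def glue_path_def)

lemma newrel_zero:
  fixes f :: "'a \<times> ('v,'a) qpath \<Rightarrow> 'k::field"
  assumes f: "f \<in> cochains1 Q Z"
    and lz: "\<forall>c\<in>arrs Q. src Q c = tgt Q c \<and> src Q c \<in> {u,w} \<longrightarrow> f (c, (src Q c, [])) = 0"
    and bc: "b \<in> arrs Q" "c \<in> arrs Q" "tgt Q c \<in> {u,w}" "src Q b \<in> {u,w}" "tgt Q c \<noteq> src Q b"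
  shows "der_path (glue_quiver Q u w) (glue_rels Q Z u w) (psi1 u w f) (gluev u w (src Q c), [c,b]) q = 0"
proof -
  let ?BB = "basis_paths (glue_quiver Q u w) (glue_rels Q Z u w)"
  let ?r = "(gluev u w (src Q c), [c,b])"
  have notB: "q \<notin> ?BB" if "x \<in> arrs Q" "y \<in> arrs Q" "tgt Q x \<in> {u,w}" "src Q y \<in> {u,w}"
      "tgt Q x \<noteq> src Q y" "sublist [x,y] (snd q)" for x y
  proof -
    have "(gluev u w (src Q x), [x,y]) \<in> glue_rels Q Z u w"
      using that unfolding glue_rels_def by blast
    then show ?thesis using that(6) unfolding basis_paths_def by force
  qed
  have zero: "repl_coeff (glue_quiver Q u w) (glue_rels Q Z u w) ?r a \<gamma>' q = (0::'k)"
    if nz: "psi1 u w f (a, \<gamma>') \<noteq> 0" for a \<gamma>'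
  proof -
    obtain \<gamma> where g: "f (a, \<gamma>) \<noteq> 0" "glue_path u w \<gamma> = \<gamma>'"
      using Phi_supp[OF nz[unfolded psi1_Phi2]] by blast
    have ga: "a \<in> arrs Q" "is_path Q \<gamma>" "fst \<gamma> = src Q a" "ptgt Q \<gamma> = tgt Q a"
      using cochainsD[OF f g(1)] by auto
    have cg: "chain Q (fst \<gamma>) (snd \<gamma>)" using ga(2) by (simp add: is_path_chain)
    have sg: "set (snd \<gamma>) \<subseteq> arrs Q" using ga(2) by (simp add: is_path_def)
    have sg': "snd \<gamma>' = snd \<gamma>" using g(2) by (auto simp: glue_path_def)
    have E: "{i. i < length (snd ?r) \<and> snd ?r ! i = a \<and>
          (fst ?r, take i (snd ?r) @ snd \<gamma>' @ drop (Suc i) (snd ?r)) = q} = {}" if qB: "q \<in> ?BB"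
    proof (rule ccontr)
      assume "\<not> ?thesis"
      then obtain i where iin: "i \<in> {i. i < length (snd ?r) \<and> snd ?r ! i = a \<and>
          (fst ?r, take i (snd ?r) @ snd \<gamma>' @ drop (Suc i) (snd ?r)) = q}" by blast
      have "i = 0 \<or> i = 1" using iin by auto
      then show False
      proof
        assume i0: "i = 0"
        then have ac: "a = c" and sq: "snd q = snd \<gamma> @ [b]" using iin sg' by auto
        show False
        proof (cases "snd \<gamma> = []")
          case True
          then have "src Q c = tgt Q c" using ga ac by (simp add: ptgt_def)
          moreover have "\<gamma> = (src Q c, [])" using True ga(3) ac by (metis prod.collapse)
          ultimately show False using lz bc g(1) ac by auto
        next
          case False
          let ?l = "last (snd \<gamma>)"
          have la: "?l \<in> arrs Q" using sg False by auto
          have lt: "tgt Q ?l = tgt Q c" using ga(4) False ac by (simp add: ptgt_def)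
          have "snd q = butlast (snd \<gamma>) @ [?l, b] @ []" using sq False
            by (metis append_Cons append_Nil append_assoc append_butlast_last_id self_append_conv)
          then have "sublist [?l, b] (snd q)" by (metis sublist_appendI)
          then show False using notB[OF la bc(1)] lt bc qB by auto
        qed
      next
        assume i1: "i = 1"
        then have ab: "a = b" and sq: "snd q = c # snd \<gamma>" using iin sg' by auto
        show False
        proof (cases "snd \<gamma>")
          case Nil
          then have "src Q b = tgt Q b" using ga ab by (simp add: ptgt_def)
          moreover have "\<gamma> = (src Q b, [])" using Nil ga(3) ab by (metis prod.collapse)
          ultimately show False using lz bc g(1) ab by auto
        next
          case (Cons h t)
          have ha: "h \<in> arrs Q" "src Q h = src Q b" using cg Cons ga(3) ab by auto
          have "sublist [c, h] (snd q)" using sq Cons by (metis append_Cons append_Nil sublist_appendI)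
          then show False using notB[OF bc(2) ha(1)] ha bc qB by auto
        qed
      qed
    qed
    show ?thesis
    proof (cases "q \<in> ?BB")
      case True
      show ?thesis unfolding repl_coeff_def E[OF True] by simp
    next
      case False
      then show ?thesis unfolding repl_coeff_def by simp
    qed
  qed
  show ?thesis unfolding der_path_def
  proof (rule sum.neutral, rule ballI)
    fix y assume "y \<in> {y. psi1 u w f y \<noteq> 0}"
    then obtain a \<gamma>' where y: "y = (a, \<gamma>')" "psi1 u w f (a, \<gamma>') \<noteq> 0" by (cases y) auto
    show "psi1 u w f y * repl_coeff (glue_quiver Q u w) (glue_rels Q Z u w) ?r (fst y) (snd y) q = 0"
      using zero[OF y(2)] y(1) by simp
  qed
qed



lemma psi_KB:
  fixes f :: "'a \<times> ('v,'a) qpath \<Rightarrow> 'k::field"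
  assumes mono: "monomial Q Z" and f: "f \<in> ker1 Q Z"
    and lz: "\<forall>c\<in>arrs Q. src Q c = tgt Q c \<and> src Q c \<in> {u,w} \<longrightarrow> f (c, (src Q c, [])) = 0"
  shows "psi1 u w f \<in> ker1 (glue_quiver Q u w) (glue_rels Q Z u w)"
proof -
  let ?BB = "basis_paths (glue_quiver Q u w) (glue_rels Q Z u w)"
  have fc: "f \<in> cochains1 Q Z" using f by (simp add: ker1_def)
  have finT: "finite {x. f x \<noteq> 0}" using fc by (simp add: cochains1_def)
  have sup: "a \<in> arrs (glue_quiver Q u w) \<and> q \<in> ?BB \<and> parallel (glue_quiver Q u w) (arrow_path (glue_quiver Q u w) a) q"
    if nz: "psi1 u w f (a, q) \<noteq> 0" for a q
  proof -
    obtain \<gamma> where g: "f (a, \<gamma>) \<noteq> 0" "glue_path u w \<gamma> = q"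
      using Phi_supp[OF nz[unfolded psi1_Phi2]] by blast
    have ga: "a \<in> arrs Q" "\<gamma> \<in> basis_paths Q Z" "is_path Q \<gamma>" "fst \<gamma> = src Q a" "ptgt Q \<gamma> = tgt Q a"
      using cochainsD[OF fc g(1)] by auto
    have "q \<in> ?BB" unfolding g(2)[symmetric] using basis_glue[OF ga(3), of u w Z] ga(2) by simp
    moreover have "parallel (glue_quiver Q u w) (arrow_path (glue_quiver Q u w) a) q"
    proof -
      have st: "src (glue_quiver Q u w) a = gluev u w (src Q a)" "tgt (glue_quiver Q u w) a = gluev u w (tgt Q a)"
        by (simp_all add: glue_quiver_def)
      show ?thesis unfolding parallel_arrow g(2)[symmetric] ptgt_glue st
        by (simp add: glue_path_def ga(4) ga(5))
    qed
    ultimately show ?thesis using ga(1) by (simp add: glue_quiver_def)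
  qed
  have fin: "finite {x. psi1 u w f x \<noteq> 0}"
  proof (rule finite_subset)
    show "{x. psi1 u w f x \<noteq> 0} \<subseteq> (\<lambda>x. (fst x, glue_path u w (snd x))) ` {x. f x \<noteq> 0}"
    proof
      fix y assume "y \<in> {x. psi1 u w f x \<noteq> 0}"
      then have "Phi (\<lambda>x. (fst x, glue_path u w (snd x))) f y \<noteq> 0" by (simp add: psi1_Phi)
      then obtain x where x: "f x \<noteq> 0" "(fst x, glue_path u w (snd x)) = y"
        using Phi_supp[of "\<lambda>x. (fst x, glue_path u w (snd x))" f y] by blast
      show "y \<in> (\<lambda>x. (fst x, glue_path u w (snd x))) ` {x. f x \<noteq> 0}"
        by (rule image_eqI[of y _ x]) (use x in auto)
    qed
  qed (use finT in simp)
  have cB: "psi1 u w f \<in> cochains1 (glue_quiver Q u w) (glue_rels Q Z u w)"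
    unfolding cochains1_def using fin sup by blast
  have dB: "delta1 (glue_quiver Q u w) (glue_rels Q Z u w) (psi1 u w f) = (\<lambda>_. 0)"
  proof (rule ext, clarify)
    fix r q
    show "delta1 (glue_quiver Q u w) (glue_rels Q Z u w) (psi1 u w f) (r, q) = 0"
    proof (cases "r \<in> glue_rels Q Z u w")
      case False then show ?thesis by (simp add: delta1_def)
    next
      case True
      have "r \<in> glue_path u w ` Z \<or> (\<exists>b c. r = (gluev u w (src Q c), [c,b]) \<and> b \<in> arrs Q \<and> c \<in> arrs Q
           \<and> tgt Q c \<in> {u,w} \<and> src Q b \<in> {u,w} \<and> tgt Q c \<noteq> src Q b)"
        using True by (simp only: glue_rels_def Un_iff mem_Collect_eq)
      then consider (old) r0 where "r0 \<in> Z" "r = glue_path u w r0"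
        | (new) b c where "r = (gluev u w (src Q c), [c,b])" "b \<in> arrs Q" "c \<in> arrs Q"
           "tgt Q c \<in> {u,w}" "src Q b \<in> {u,w}" "tgt Q c \<noteq> src Q b"
        by (elim disjE exE conjE imageE) blast+
      then show ?thesis
      proof cases
        case old
        have rp: "is_path Q r0" using mono old(1) by (simp add: monomial_def)
        have z: "der_path Q Z f r0 p' = 0" for p'
        proof -
          have "delta1 Q Z f (r0, p') = 0" using f by (simp add: ker1_def)
          then show ?thesis using old(1) by (simp add: delta1_def)
        qed
        show ?thesis using True old(2) by (simp add: delta1_def DP[OF fc rp] z)
      next
        case new
        show ?thesis using True new(1) newrel_zero[OF fc lz new(2-6)] by (simp add: delta1_def)
      qed
    qed
  qed
  show ?thesis using cB dB by (simp add: ker1_def)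
qed



lemma psi_recover:
  assumes fc: "f \<in> cochains1 Q Z"
  shows "f (a, (v, l)) = (if v = src Q a then psi1 u w f (a, (gluev u w v, l)) else 0)"
proof (cases "v = src Q a")
  case True
  have pt: "p = (v, l)" if "f (a, p) \<noteq> 0" "glue_path u w p = (gluev u w v, l)" for p
  proof -
    have "snd p = l" using that(2) by (simp add: glue_path_def)
    moreover have "fst p = v" using cochainsD(4)[OF fc that(1)] True by simp
    ultimately show ?thesis by (simp add: prod_eq_iff)
  qed
  have Ssub: "{p. f (a, p) \<noteq> 0 \<and> glue_path u w p = (gluev u w v, l)} \<subseteq> {(v, l)}"
    using pt by blast
  have ps: "psi1 u w f (a, (gluev u w v, l)) = (\<Sum>p\<in>{p. f (a, p) \<noteq> 0 \<and> glue_path u w p = (gluev u w v, l)}. f (a, p))"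
    unfolding psi1_def prod.case ..
  show ?thesis
  proof (cases "f (a, (v, l)) = 0")
    case True2: True
    have E: "{p. f (a, p) \<noteq> 0 \<and> glue_path u w p = (gluev u w v, l)} = {}" using Ssub True2 by blast
    show ?thesis using True True2 ps[unfolded E] by simp
  next
    case False
    have "{p. f (a, p) \<noteq> 0 \<and> glue_path u w p = (gluev u w v, l)} = {(v, l)}"
      by (rule equalityI[OF Ssub]) (simp add: glue_path_def False)
    note E = this
    show ?thesis using True ps[unfolded E] by simp
  qed
next
  case False
  then show ?thesis using cochainsD(4)[OF fc, of a "(v,l)"] by auto
qed


lemma psi1_alt: "psi1 u w f (a, q) = (\<Sum>p\<in>{p. glue_path u w p = q}. f (a, p))"
  by (simp add: psi1_Phi2 Phi_alt pre_finite)



lemma fin_slice: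
  assumes "f \<in> cochains1 Q Z"
  shows "finite {p. f (x, p) \<noteq> 0}" "\<forall>p. f (x, p) \<noteq> 0 \<longrightarrow> is_path Q p"
proof -
  have F: "finite {y. f y \<noteq> 0}" using assms unfolding cochains1_def by blast
  have "{p. f (x, p) \<noteq> 0} = Pair x -` {y. f y \<noteq> 0}" by auto
  moreover have "finite (Pair x -` {y. f y \<noteq> 0})"
    by (rule finite_vimageI[OF F]) (simp add: inj_on_def)
  ultimately show "finite {p. f (x, p) \<noteq> 0}" by simp
  show "\<forall>p. f (x, p) \<noteq> 0 \<longrightarrow> is_path Q p" using cochainsD(3)[OF assms] by blast
qed


theorem proposition3p12:
  fixes Q :: "('v, 'a) quiver" and Z :: "('v, 'a) qpath set" and u w :: 'v
  assumes mono: "monomial Q Z"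
    and u: "u \<in> verts Q" and w: "w \<in> verts Q" and uw: "u \<noteq> w"
    and niu: "non_isolated Q u" and niw: "non_isolated Q w"
    and loops: "\<forall>\<alpha>\<in>arrs Q. \<forall>m::nat. 2 \<le> m \<and> src Q \<alpha> = tgt Q \<alpha> \<and> src Q \<alpha> \<in> {u, w}
                   \<and> (src Q \<alpha>, replicate m \<alpha>) \<in> Z \<longrightarrow> \<not> CHAR('k::field) dvd m"
  defines "KA \<equiv> (ker1 Q Z :: ('a \<times> ('v, 'a) qpath \<Rightarrow> 'k) set)"
    and "KB \<equiv> (ker1 (glue_quiver Q u w) (glue_rels Q Z u w) :: ('a \<times> ('v, 'a) qpath \<Rightarrow> 'k) set)"
  shows "(\<forall>f\<in>KA. psi1 u w f \<in> KB)
    \<and> inj_on (psi1 u w) KA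
    \<and> (\<forall>f\<in>KA. \<forall>g\<in>KA. psi1 u w (\<lambda>x. f x + g x) = (\<lambda>x. psi1 u w f x + psi1 u w g x))
    \<and> (\<forall>f\<in>KA. \<forall>c::'k. psi1 u w (\<lambda>x. c * f x) = (\<lambda>x. c * psi1 u w f x))
    \<and> (\<forall>f\<in>KA. \<forall>g\<in>KA. psi1 u w (bracket Q Z f g) = bracket (glue_quiver Q u w) (glue_rels Q Z u w) (psi1 u w f) (psi1 u w g))
    \<and> (0 < CHAR('k) \<longrightarrow>
        (\<forall>f\<in>KA. psi1 u w (ppow Q Z CHAR('k) f) = ppow (glue_quiver Q u w) (glue_rels Q Z u w) CHAR('k) (psi1 u w f)))"
proof -
  have KAc: "f \<in> cochains1 Q Z" if "f \<in> KA" for f using that by (simp add: KA_def ker1_def)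
  have lz: "\<forall>c\<in>arrs Q. src Q c = tgt Q c \<and> src Q c \<in> {u,w} \<longrightarrow> f (c, (src Q c, [])) = 0"
    if fK: "f \<in> KA" for f
  proof (intro ballI impI)
    fix c assume c: "c \<in> arrs Q" "src Q c = tgt Q c \<and> src Q c \<in> {u,w}"
    have ch: "\<forall>m::nat. 2 \<le> m \<and> (src Q c, replicate m c) \<in> Z \<longrightarrow> \<not> CHAR('k) dvd m"
      using loops c by blast
    show "f (c, (src Q c, [])) = 0"
      using loop_zero[OF mono fK[unfolded KA_def] c(1) _ ch] c(2) by blast
  qed
  have P1: "\<forall>f\<in>KA. psi1 u w f \<in> KB"
  proof
    fix f assume f: "f \<in> KA"
    show "psi1 u w f \<in> KB" unfolding KB_def
      by (rule psi_KB[OF mono f[unfolded KA_def] lz[OF f]])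
  qed
  have P2: "inj_on (psi1 u w) KA"
  proof (rule inj_onI)
    fix f g assume f: "f \<in> KA" and g: "g \<in> KA" and e: "psi1 u w f = psi1 u w g"
    show "f = g"
    proof (rule ext)
      fix x :: "'a \<times> ('v, 'a) qpath"
      obtain a v l where x: "x = (a, (v, l))" by (metis prod.collapse)
      show "f x = g x" unfolding x
        using psi_recover[OF KAc[OF f], of a v l u w] psi_recover[OF KAc[OF g], of a v l u w] e by simp
    qed
  qed
  have P3: "\<forall>f\<in>KA. \<forall>g\<in>KA. psi1 u w (\<lambda>x. f x + g x) = (\<lambda>x. psi1 u w f x + psi1 u w g x)"
  proof (intro ballI ext)
    fix f g :: "'a \<times> ('v, 'a) qpath \<Rightarrow> 'k" and x :: "'a \<times> ('v, 'a) qpath"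
    obtain a q where x: "x = (a, q)" by (cases x)
    show "psi1 u w (\<lambda>x. f x + g x) x = psi1 u w f x + psi1 u w g x"
      unfolding x psi1_alt by (rule sum.distrib)
  qed
  have P4: "\<forall>f\<in>KA. \<forall>c::'k. psi1 u w (\<lambda>x. c * f x) = (\<lambda>x. c * psi1 u w f x)"
  proof (intro ballI allI ext)
    fix f :: "'a \<times> ('v, 'a) qpath \<Rightarrow> 'k" and c :: 'k and x :: "'a \<times> ('v, 'a) qpath"
    obtain a q where x: "x = (a, q)" by (cases x)
    show "psi1 u w (\<lambda>x. c * f x) x = c * psi1 u w f x"
      unfolding x psi1_alt by (rule sum_distrib_left[symmetric])
  qed
  have P5: "\<forall>f\<in>KA. \<forall>g\<in>KA. psi1 u w (bracket Q Z f g) = bracket (glue_quiver Q u w) (glue_rels Q Z u w) (psi1 u w f) (psi1 u w g)"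
  proof (intro ballI)
    fix f g assume f: "f \<in> KA" and g: "g \<in> KA"
    show "psi1 u w (bracket Q Z f g) = bracket (glue_quiver Q u w) (glue_rels Q Z u w) (psi1 u w f) (psi1 u w g)"
    proof (rule ext, clarify)
      fix x q
      have eg: "(\<lambda>e. psi1 u w g (x, e)) = Phi (glue_path u w) (\<lambda>p. g (x, p))" by (simp add: psi1_Phi2)
      have ef: "(\<lambda>e. psi1 u w f (x, e)) = Phi (glue_path u w) (\<lambda>p. f (x, p))" by (simp add: psi1_Phi2)
      have D1: "der (glue_quiver Q u w) (glue_rels Q Z u w) (psi1 u w f) (Phi (glue_path u w) (\<lambda>p. g (x, p)))
          = Phi (glue_path u w) (der Q Z f (\<lambda>p. g (x, p)))"
        by (rule DER[OF KAc[OF f] fin_slice[OF KAc[OF g]]])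
      have D2: "der (glue_quiver Q u w) (glue_rels Q Z u w) (psi1 u w g) (Phi (glue_path u w) (\<lambda>p. f (x, p)))
          = Phi (glue_path u w) (der Q Z g (\<lambda>p. f (x, p)))"
        by (rule DER[OF KAc[OF g] fin_slice[OF KAc[OF f]]])
      have "bracket (glue_quiver Q u w) (glue_rels Q Z u w) (psi1 u w f) (psi1 u w g) (x, q)
         = der (glue_quiver Q u w) (glue_rels Q Z u w) (psi1 u w f) (\<lambda>e. psi1 u w g (x, e)) q
           - der (glue_quiver Q u w) (glue_rels Q Z u w) (psi1 u w g) (\<lambda>e. psi1 u w f (x, e)) q"
        unfolding bracket_def prod.case ..
      also have "\<dots> = Phi (glue_path u w) (der Q Z f (\<lambda>p. g (x, p))) q - Phi (glue_path u w) (der Q Z g (\<lambda>p. f (x, p))) q"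
        unfolding eg ef D1 D2 ..
      also have "\<dots> = (\<Sum>p\<in>{p. glue_path u w p = q}. der Q Z f (\<lambda>e. g (x, e)) p - der Q Z g (\<lambda>e. f (x, e)) p)"
        by (simp add: Phi_alt pre_finite sum_subtractf)
      also have "\<dots> = psi1 u w (bracket Q Z f g) (x, q)"
        unfolding psi1_alt bracket_def prod.case ..
      finally show "psi1 u w (bracket Q Z f g) (x, q) = bracket (glue_quiver Q u w) (glue_rels Q Z u w) (psi1 u w f) (psi1 u w g) (x, q)" by simp
    qed
  qed
  have P6: "0 < CHAR('k) \<longrightarrow>
        (\<forall>f\<in>KA. psi1 u w (ppow Q Z CHAR('k) f) = ppow (glue_quiver Q u w) (glue_rels Q Z u w) CHAR('k) (psi1 u w f))"
  proof (intro impI ballI)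
    fix f assume f: "f \<in> KA"
    show "psi1 u w (ppow Q Z CHAR('k) f) = ppow (glue_quiver Q u w) (glue_rels Q Z u w) CHAR('k) (psi1 u w f)"
    proof (rule ext, clarify)
      fix x q
      have ef: "(\<lambda>e. psi1 u w f (x, e)) = Phi (glue_path u w) (\<lambda>p. f (x, p))" by (simp add: psi1_Phi2)
      have ep: "(\<lambda>p. ppow Q Z CHAR('k) f (x, p)) = (der Q Z f ^^ (CHAR('k) - 1)) (\<lambda>e. f (x, e))"
        unfolding ppow_def prod.case ..
      have DI: "Phi (glue_path u w) ((der Q Z f ^^ (CHAR('k) - 1)) (\<lambda>p. f (x, p)))
         = (der (glue_quiver Q u w) (glue_rels Q Z u w) (psi1 u w f) ^^ (CHAR('k) - 1)) (Phi (glue_path u w) (\<lambda>p. f (x, p)))"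
        by (rule DER_iter[OF KAc[OF f] mono fin_slice[OF KAc[OF f]]])
      have "psi1 u w (ppow Q Z CHAR('k) f) (x, q) = Phi (glue_path u w) (\<lambda>p. ppow Q Z CHAR('k) f (x, p)) q"
        by (rule psi1_Phi2)
      also have "\<dots> = (der (glue_quiver Q u w) (glue_rels Q Z u w) (psi1 u w f) ^^ (CHAR('k) - 1)) (Phi (glue_path u w) (\<lambda>p. f (x, p))) q"
        unfolding ep DI ..
      also have "\<dots> = ppow (glue_quiver Q u w) (glue_rels Q Z u w) CHAR('k) (psi1 u w f) (x, q)"
        unfolding ppow_def prod.case ef ..
      finally show "psi1 u w (ppow Q Z CHAR('k) f) (x, q) = ppow (glue_quiver Q u w) (glue_rels Q Z u w) CHAR('k) (psi1 u w f) (x, q)" .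
    qed
  qed
  show ?thesis using P1 P2 P3 P4 P5 P6 by blast
qed


end
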